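(* Let $p,q\geq 0$ be integers and let $M$ be a $(p+q)\times(p+q)$ complex matrix with $M=M^*$ and $M^*I_{p,q}M=I_{p,q}$. Then \[ \operatorname{rank}(M-I_{p,q})+\operatorname{rank}(M+I_{p,q})\leq p+q. \]
   Context: $I_{p,q}=\mathrm{diag}\{I_p,-I_q\}$, where $I_p$ is the $p\times p$ identity matrix; $M^*$ denotes the conjugate transpose of $M$. The set of such $M$ is denoted $\mathbf{U}_s(p,q)$ (self-adjoint elements of the pseudo-unitary group $\mathbf{U}(p,q)=\{M\in\mathbf{GL}(p+q,\mathbb{C}):M^*I_{p,q}M=I_{p,q}\}$). *)

theory Defs
  imports "Jordan_Normal_Form.Schur_Decomposition" "Jordan_Normal_Form.DL_Rank"
begin

definition Ipq :: "nat \<Rightarrow> nat \<Rightarrow> complex mat" where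
  "Ipq p q = mat (p + q) (p + q)
     (\<lambda>(i, j). if i = j then (if i < p then 1 else -1) else 0)"

end

theory Submission
  imports Defs "Jordan_Normal_Form.Matrix_Kernel"
begin

lemma rank_nullity_mat:
  fixes A :: "'a::field mat"
  assumes A: "A \<in> carrier_mat nr nc"
  shows "vec_space.rank nr A + kernel_dim A = nc"
proof -
  interpret NC: vec_space "TYPE('a)" nc .
  interpret NR: vec_space "TYPE('a)" nr .
  interpret K: kernel nr nc A by (unfold_locales, rule A)
  interpret L: linear_map class_ring "module_vec TYPE('a) nc" "module_vec TYPE('a) nr" "\<lambda>v. A *\<^sub>v v"
  proof (unfold_locales)
    show "(\<lambda>v. A *\<^sub>v v) \<in> LinearCombinations.module_hom class_ring (module_vec TYPE('a) nc) (module_vec TYPE('a) nr)"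
      unfolding LinearCombinations.module_hom_def 
      using A by (auto simp: mult_add_distrib_mat_vec mult_mat_vec module_vec_simps class_ring_simps)
  qed
  have im: "L.imT = NR.span (set (cols A))"
    using NR.col_space_eq[OF A] A unfolding NR.col_space_def mod_hom.im_def[OF L.mod_hom_axioms]
    by (auto simp: module_vec_simps)
  have ker: "L.kerT = mat_kernel A"
    using A unfolding mod_hom.ker_def[OF L.mod_hom_axioms] mat_kernel_def
    by (auto simp: module_vec_simps)
  have "vectorspace.dim class_ring (NR.vs L.imT) + vectorspace.dim class_ring (NC.vs L.kerT) = NC.dim"
    by (rule L.rank_nullity) simp
  then show ?thesis unfolding im ker NC.dim_is_n NR.rank_def K.kernel_dim by simp
qed


lemma prod_zero_rank:
  fixes A B :: "'a::field mat"
  assumes A: "A \<in> carrier_mat n n" and B: "B \<in> carrier_mat n n" and AB: "A * B = 0\<^sub>m n n"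
  shows "vec_space.rank n A + vec_space.rank n B \<le> n"
proof -
  interpret NC: vec_space "TYPE('a)" n .
  interpret K: kernel n n A by (unfold_locales, rule A)
  interpret L: linear_map class_ring "module_vec TYPE('a) n" "module_vec TYPE('a) n" "\<lambda>v. A *\<^sub>v v"
  proof (unfold_locales)
    show "(\<lambda>v. A *\<^sub>v v) \<in> LinearCombinations.module_hom class_ring (module_vec TYPE('a) n) (module_vec TYPE('a) n)"
      unfolding LinearCombinations.module_hom_def 
      using A by (auto simp: mult_add_distrib_mat_vec mult_mat_vec module_vec_simps class_ring_simps)
  qed
  have ker: "L.kerT = mat_kernel A"
    using A unfolding mod_hom.ker_def[OF L.mod_hom_axioms] mat_kernel_def
    by (auto simp: module_vec_simps)
  have subK: "VectorSpace.subspace class_ring (mat_kernel A) NC.V"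
    using L.kerT_is_subspace unfolding ker .
  have colsB: "set (cols B) \<subseteq> carrier_vec n" using B cols_dim by blast
  have subS: "VectorSpace.subspace class_ring (NC.span (set (cols B))) NC.V"
    by (rule NC.span_is_subspace[OF colsB])
  have colsK: "set (cols B) \<subseteq> mat_kernel A"
  proof
    fix v assume "v \<in> set (cols B)"
    then obtain j where j: "j < n" and v: "v = col B j" using B
      by (metis cols_length cols_nth carrier_matD(2) in_set_conv_nth)
    have "A *\<^sub>v v = col (A * B) j" using col_mult2[OF A B j] v by simp
    also have "\<dots> = 0\<^sub>v n" using AB j by simp
    finally show "v \<in> mat_kernel A" using v B j A
      by (intro mat_kernelI[OF A]) auto
  qed
  have SK: "NC.span (set (cols B)) \<subseteq> mat_kernel A"
    by (rule NC.span_is_subset[OF colsK]) (use subK in \<open>simp add: VectorSpace.subspace_def\<close>)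
  have sub2: "VectorSpace.subspace class_ring (NC.span (set (cols B))) K.VK"
    using NC.nested_subspaces[OF subK subS SK] by simp
  obtain Bs where "finite Bs" "K.basis Bs" using kernel_basis_exists[OF A] by blast
  then have fdK: "K.Ker.fin_dim" unfolding K.Ker.fin_dim_def K.Ker.basis_def by blast
  have fdS: "vectorspace.fin_dim class_ring (K.Ker.vs (NC.span (set (cols B))))"
    using NC.fin_dim_span_cols[OF B] by simp
  have "vec_space.rank n B \<le> kernel_dim A"
    using K.Ker.subspace_dim[OF sub2 fdK fdS] unfolding NC.rank_def K.kernel_dim by simp
  moreover have "vec_space.rank n A + kernel_dim A = n" by (rule rank_nullity_mat[OF A])
  ultimately show ?thesis by simp
qed


lemma rank_left_inv:
  fixes A P Q :: "'a::field mat"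
  assumes A: "A \<in> carrier_mat n n" and P: "P \<in> carrier_mat n n" and Q: "Q \<in> carrier_mat n n"
    and QP: "Q * P = 1\<^sub>m n"
  shows "vec_space.rank n (P * A) = vec_space.rank n A"
proof -
  have PA: "P * A \<in> carrier_mat n n" using P A by simp
  have "kernel_dim (P * A) = kernel_dim A"
    unfolding kernel_dim_def using mat_kernel_mult_eq[OF A P Q QP] P A by simp
  then show ?thesis using rank_nullity_mat[OF A] rank_nullity_mat[OF PA] by simp
qed

lemma Ipq_carrier: "Ipq p q \<in> carrier_mat (p + q) (p + q)"
  unfolding Ipq_def by simp

lemma Ipq_sq: "Ipq p q * Ipq p q = 1\<^sub>m (p + q)"
proof (rule eq_matI)
  fix i j assume i: "i < dim_row (1\<^sub>m (p + q))" and j: "j < dim_col (1\<^sub>m (p + q) :: complex mat)"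
  let ?s = "\<lambda>k::nat. if k < p then (1::complex) else -1"
  have "(Ipq p q * Ipq p q) $$ (i, j) = (\<Sum>k<p+q. Ipq p q $$ (i, k) * Ipq p q $$ (k, j))"
    using i j unfolding Ipq_def by (simp add: scalar_prod_def atLeast0LessThan)
  also have "\<dots> = (\<Sum>k<p+q. if k = i then ?s i * Ipq p q $$ (i, j) else 0)"
    using i unfolding Ipq_def by (intro sum.cong) auto
  also have "\<dots> = ?s i * Ipq p q $$ (i, j)" using i by simp
  also have "\<dots> = 1\<^sub>m (p + q) $$ (i, j)" using i j unfolding Ipq_def by auto
  finally show "(Ipq p q * Ipq p q) $$ (i, j) = 1\<^sub>m (p + q) $$ (i, j)" .
qed (auto simp: Ipq_def)

theorem corollary3p3:
  fixes p q :: nat and M :: "complex mat"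
  assumes "M \<in> carrier_mat (p + q) (p + q)"
    and "mat_adjoint M = M"
    and "mat_adjoint M * Ipq p q * M = Ipq p q"
  shows "vec_space.rank (p + q) (M - Ipq p q) + vec_space.rank (p + q) (M + Ipq p q) \<le> p + q"
proof -
  define n where "n = p + q"
  define J where "J = Ipq p q"
  have Mc: "M \<in> carrier_mat n n" using assms(1) n_def by simp
  have Jc: "J \<in> carrier_mat n n" using Ipq_carrier n_def J_def by simp
  have JJ: "J * J = 1\<^sub>m n" using Ipq_sq n_def J_def by simp
  have MJM: "M * (J * M) = J" using assms(2,3) Mc Jc J_def by simp
  have X: "J * (M + J) = J * M + 1\<^sub>m n"
    using mult_add_distrib_mat[OF Jc Mc Jc] JJ by simp
  have JMc: "J * M \<in> carrier_mat n n" using Jc Mc by simp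
  have MX: "M * (J * M + 1\<^sub>m n) = J + M"
    using mult_add_distrib_mat[OF Mc JMc one_carrier_mat] MJM Mc by simp
  have JX: "J * (J * M + 1\<^sub>m n) = M + J"
  proof -
    have "J * (J * M + 1\<^sub>m n) = J * (J * M) + J * 1\<^sub>m n"
      using mult_add_distrib_mat[OF Jc JMc one_carrier_mat] .
    also have "J * (J * M) = (J * J) * M" using Jc Mc by simp
    finally show ?thesis using JJ Mc Jc by simp
  qed
  have Xc: "J * M + 1\<^sub>m n \<in> carrier_mat n n" using JMc by simp
  have "(M - J) * (J * (M + J)) = M * (J * M + 1\<^sub>m n) - J * (J * M + 1\<^sub>m n)"
    unfolding X by (rule minus_mult_distrib_mat[OF Mc Jc Xc])
  also have "\<dots> = 0\<^sub>m n n" unfolding MX JX using Mc Jc by (intro eq_matI) auto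
  finally have Z: "(M - J) * (J * (M + J)) = 0\<^sub>m n n" .
  have "vec_space.rank n (M - J) + vec_space.rank n (J * (M + J)) \<le> n"
    by (rule prod_zero_rank[OF minus_carrier_mat[OF Jc] _ Z]) (use Jc Mc in simp)
  moreover have "vec_space.rank n (J * (M + J)) = vec_space.rank n (M + J)"
    by (rule rank_left_inv[OF add_carrier_mat[OF Jc] Jc Jc JJ])
  ultimately show ?thesis unfolding n_def J_def by simp
qed

end
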